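(* Let $(\Omega,\Sigma,\mathbb{P})$ be an admissible measure space where $\mathbb{P}$ is a probability measure without atoms, and let $\mathcal{J}(\mathbb{P})$ be the set of all Banach ideal spaces $E$ on $(\Omega,\Sigma,\mathbb{P})$ of maximal width satisfying the norming condition $\|\chi_\Omega\|_E=1$ (spaces $E,F$ identified when $E\subset^1F$ and $F\subset^1E$). Then the lattice $\langle\mathcal{J}(\mathbb{P}),\vee,\wedge\rangle$, with $E\vee F=E+F$ and $E\wedge F=E\cap F$ (ordered by $\subset^{1}$), is Dedekind complete.
   Context: $L_0(\mathbb{P})$ is the vector lattice of classes of measurable real functions on $\Omega$, ordered a.e.; $\chi_A$ is the indicator function of $A$. Admissible measure space: $\mu$ complete; a set $A\subset\Omega$ with $A\cap B\in\Sigma$ for all $B\in\Sigma$ of finite measure lies in $\Sigma$; $\mu$ semifinite; $\mu$ has the direct sum property (a family of pairwise disjoint finite-measure sets $A_i$ such that each finite-measure $B$ is, up to a null set, a countable union of sets $B\cap A_i$). A Banach ideal space (BIS) is a vector subspace $E\subset L_0$ with complete norm such that $y\in E$, $|x|\le|y|$ a.e. imply $x\in E$, $\|x\|_E\le\|y\|_E$. Maximal width: the only $z\in L_0$ with $zy=0$ for all $y\in E$ is $z=0$. $E\subset^1F$: $E\subseteq F$ and $\|x\|_F\le\|x\|_E$ for $x\in E$. $\|x\|_{E\cap F}=\max\{\|x\|_E,\|x\|_F\}$; $\|x\|_{E+F}=\inf\{\|u\|_E+\|v\|_F:u+v=x\}$. Dedekind complete: every nonempty subset bounded above has a least upper bound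 and every nonempty subset bounded below has a greatest lower bound in $\langle\mathcal{J}(\mathbb{P}),\subset^1\rangle$. *)

theory Defs
  imports "HOL-Probability.Probability"
begin

definition complete_msr :: "'a measure \<Rightarrow> bool" where
  "complete_msr M \<longleftrightarrow> (\<forall>A \<in> null_sets M. \<forall>B. B \<subseteq> A \<longrightarrow> B \<in> sets M)"

definition locally_determined :: "'a measure \<Rightarrow> bool" where
  "locally_determined M \<longleftrightarrow>
     (\<forall>A. A \<subseteq> space M \<longrightarrow>
        (\<forall>B \<in> sets M. emeasure M B < \<infinity> \<longrightarrow> A \<inter> B \<in> sets M) \<longrightarrow> A \<in> sets M)"

definition semifinite_msr :: "'a measure \<Rightarrow> bool" where
  "semifinite_msr M \<longleftrightarrow>
     (\<forall>A \<in> sets M. emeasure M A = \<infinity> \<longrightarrow>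
        (\<exists>B \<in> sets M. B \<subseteq> A \<and> 0 < emeasure M B \<and> emeasure M B < \<infinity>))"

definition direct_sum_property :: "'a measure \<Rightarrow> bool" where
  "direct_sum_property M \<longleftrightarrow>
     (\<exists>\<A>. \<A> \<subseteq> sets M \<and> disjoint \<A> \<and> (\<forall>A \<in> \<A>. emeasure M A < \<infinity>) \<and>
        (\<forall>B \<in> sets M. emeasure M B < \<infinity> \<longrightarrow>
           (\<exists>\<C>. \<C> \<subseteq> \<A> \<and> countable \<C> \<and>
               B - (\<Union>A\<in>\<C>. B \<inter> A) \<in> null_sets M)))"

definition admissible :: "'a measure \<Rightarrow> bool" where
  "admissible M \<longleftrightarrow> complete_msr M \<and> locally_determined M \<and> semifinite_msr M
                     \<and> direct_sum_property M"

definition atomless :: "'a measure \<Rightarrow> bool" where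
  "atomless M \<longleftrightarrow>
     (\<forall>A \<in> sets M. 0 < emeasure M A \<longrightarrow>
        (\<exists>B \<in> sets M. B \<subseteq> A \<and> 0 < emeasure M B \<and> emeasure M B < emeasure M A))"

text \<open>Elements of L_0 are represented by measurable real functions; a space is a set of
  such functions together with a norm functional (only its values on the set matter).
  The ideal property makes the set closed under a.e.-equality and the norm a.e.-invariant,
  so this represents a space of equivalence classes.\<close>

type_synonym 'a bis = "('a \<Rightarrow> real) set \<times> (('a \<Rightarrow> real) \<Rightarrow> real)"

definition is_BIS :: "'a measure \<Rightarrow> 'a bis \<Rightarrow> bool" where
  "is_BIS M X \<longleftrightarrow> (case X of (E, N) \<Rightarrow>
     E \<subseteq> borel_measurable M \<and>
     (\<lambda>_. 0) \<in> E \<and>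
     (\<forall>x\<in>E. \<forall>y\<in>E. (\<lambda>t. x t + y t) \<in> E) \<and>
     (\<forall>c::real. \<forall>x\<in>E. (\<lambda>t. c * x t) \<in> E) \<and>
     (\<forall>x\<in>E. \<forall>y\<in>E. N (\<lambda>t. x t + y t) \<le> N x + N y) \<and>
     (\<forall>c::real. \<forall>x\<in>E. N (\<lambda>t. c * x t) = \<bar>c\<bar> * N x) \<and>
     (\<forall>x\<in>E. N x = 0 \<longleftrightarrow> (AE t in M. x t = 0)) \<and>
     (\<forall>f :: nat \<Rightarrow> 'a \<Rightarrow> real. (\<forall>n. f n \<in> E) \<longrightarrow>
        (\<forall>\<epsilon>>0. \<exists>K. \<forall>m\<ge>K. \<forall>n\<ge>K. N (\<lambda>t. f m t - f n t) < \<epsilon>) \<longrightarrow>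
        (\<exists>g\<in>E. (\<lambda>n. N (\<lambda>t. f n t - g t)) \<longlonglongrightarrow> 0)) \<and>
     (\<forall>x \<in> borel_measurable M. \<forall>y\<in>E. (AE t in M. \<bar>x t\<bar> \<le> \<bar>y t\<bar>) \<longrightarrow>
        x \<in> E \<and> N x \<le> N y))"

definition maximal_width :: "'a measure \<Rightarrow> 'a bis \<Rightarrow> bool" where
  "maximal_width M X \<longleftrightarrow>
     (\<forall>z \<in> borel_measurable M. (\<forall>y \<in> fst X. AE t in M. z t * y t = 0) \<longrightarrow>
        (AE t in M. z t = 0))"

definition J_class :: "'a measure \<Rightarrow> 'a bis set" where
  "J_class M = {X. is_BIS M X \<and> maximal_width M X \<and>
                   (\<lambda>_. 1) \<in> fst X \<and> snd X (\<lambda>_. 1) = 1}"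

definition sub1 :: "'a bis \<Rightarrow> 'a bis \<Rightarrow> bool" where
  "sub1 X Y \<longleftrightarrow> fst X \<subseteq> fst Y \<and> (\<forall>x \<in> fst X. snd Y x \<le> snd X x)"

text \<open>Dedekind completeness of a set with respect to a preorder (modulo the induced
  equivalence): every nonempty subset bounded above has a least upper bound in the set,
  and every nonempty subset bounded below has a greatest lower bound in the set.\<close>
definition dedekind_complete :: "'b set \<Rightarrow> ('b \<Rightarrow> 'b \<Rightarrow> bool) \<Rightarrow> bool" where
  "dedekind_complete J le \<longleftrightarrow>
     (\<forall>S. S \<subseteq> J \<and> S \<noteq> {} \<and> (\<exists>U\<in>J. \<forall>X\<in>S. le X U) \<longrightarrow>
        (\<exists>L\<in>J. (\<forall>X\<in>S. le X L) \<and> (\<forall>U\<in>J. (\<forall>X\<in>S. le X U) \<longrightarrow> le L U))) \<and>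
     (\<forall>S. S \<subseteq> J \<and> S \<noteq> {} \<and> (\<exists>U\<in>J. \<forall>X\<in>S. le U X) \<longrightarrow>
        (\<exists>L\<in>J. (\<forall>X\<in>S. le L X) \<and> (\<forall>U\<in>J. (\<forall>X\<in>S. le U X) \<longrightarrow> le U L)))"

end

theory Submission
  imports Defs
begin


lemma bis_unf:
  assumes "is_BIS M X"
  shows "fst X \<subseteq> borel_measurable M"
   and "(\<lambda>_. 0) \<in> fst X"
   and "\<And>x y. x \<in> fst X \<Longrightarrow> y \<in> fst X \<Longrightarrow> (\<lambda>t. x t + y t) \<in> fst X"
   and "\<And>c x. x \<in> fst X \<Longrightarrow> (\<lambda>t. c * x t) \<in> fst X"
   and "\<And>x y. x \<in> fst X \<Longrightarrow> y \<in> fst X \<Longrightarrow> snd X (\<lambda>t. x t + y t) \<le> snd X x + snd X y"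
   and "\<And>c x. x \<in> fst X \<Longrightarrow> snd X (\<lambda>t. c * x t) = \<bar>c\<bar> * snd X x"
   and "\<And>x. x \<in> fst X \<Longrightarrow> snd X x = 0 \<longleftrightarrow> (AE t in M. x t = 0)"
   and "\<And>f. (\<forall>n. f n \<in> fst X) \<Longrightarrow>
        (\<forall>\<epsilon>>0. \<exists>K. \<forall>m\<ge>K. \<forall>n\<ge>K. snd X (\<lambda>t. f m t - f n t) < \<epsilon>) \<Longrightarrow>
        (\<exists>g\<in>fst X. (\<lambda>n. snd X (\<lambda>t. f n t - g t)) \<longlonglongrightarrow> 0)"
   and "\<And>x y. x \<in> borel_measurable M \<Longrightarrow> y \<in> fst X \<Longrightarrow> (AE t in M. \<bar>x t\<bar> \<le> \<bar>y t\<bar>) \<Longrightarrow>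
        x \<in> fst X \<and> snd X x \<le> snd X y"
  using assms by (cases X; simp add: is_BIS_def)+

lemma bis_meas: "is_BIS M X \<Longrightarrow> x \<in> fst X \<Longrightarrow> x \<in> borel_measurable M"
  using bis_unf(1) by blast

lemma bis_diff: assumes "is_BIS M X" "x \<in> fst X" "y \<in> fst X"
  shows "(\<lambda>t. x t - y t) \<in> fst X"
proof -
  have "(\<lambda>t. x t + (\<lambda>t. (-1) * y t) t) \<in> fst X"
    using bis_unf(3,4)[OF assms(1)] assms by blast
  then show ?thesis by simp
qed

lemma bis_norm0: assumes "is_BIS M X" shows "snd X (\<lambda>_. 0) = 0"
  using bis_unf(2,7)[OF assms] by simp

lemma bis_nonneg: assumes "is_BIS M X" "x \<in> fst X" shows "0 \<le> snd X x"
proof -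
  have "snd X (\<lambda>t. x t + (\<lambda>t. (-1) * x t) t) \<le> snd X x + snd X (\<lambda>t. (-1) * x t)"
    using bis_unf(3,4,5)[OF assms(1)] assms(2) by blast
  also have "snd X (\<lambda>t. (-1) * x t) = snd X x" using bis_unf(6)[OF assms(1), of x "-1"] assms(2) by simp
  finally show ?thesis using bis_norm0[OF assms(1)] by simp
qed

lemma bis_diff_sym: assumes "is_BIS M X" "x \<in> fst X" "y \<in> fst X"
  shows "snd X (\<lambda>t. x t - y t) = snd X (\<lambda>t. y t - x t)"
proof -
  have "snd X (\<lambda>t. (-1) * (\<lambda>t. y t - x t) t) = snd X (\<lambda>t. y t - x t)"
    using bis_unf(6)[OF assms(1), of "\<lambda>t. y t - x t" "-1"] bis_diff[OF assms(1,3,2)] by simp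
  then show ?thesis by simp
qed

lemma bis_tri3: assumes "is_BIS M X" "x \<in> fst X" "y \<in> fst X" "z \<in> fst X"
  shows "snd X (\<lambda>t. x t - z t) \<le> snd X (\<lambda>t. x t - y t) + snd X (\<lambda>t. y t - z t)"
proof -
  have "snd X (\<lambda>t. (\<lambda>t. x t - y t) t + (\<lambda>t. y t - z t) t) \<le> snd X (\<lambda>t. x t - y t) + snd X (\<lambda>t. y t - z t)"
    using bis_unf(5)[OF assms(1) bis_diff[OF assms(1,2,3)] bis_diff[OF assms(1,3,4)]] .
  then show ?thesis by simp
qed

lemma bis_ae_eq: assumes "is_BIS M X" "y \<in> fst X" "x \<in> borel_measurable M" "AE t in M. x t = y t"
  shows "x \<in> fst X \<and> snd X x = snd X y"
proof -
  have a1: "AE t in M. \<bar>x t\<bar> \<le> \<bar>y t\<bar>" using assms(4) by eventually_elim auto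
  have a2: "AE t in M. \<bar>y t\<bar> \<le> \<bar>x t\<bar>" using assms(4) by eventually_elim auto
  have 1: "x \<in> fst X \<and> snd X x \<le> snd X y" using bis_unf(9)[OF assms(1,3,2) a1] .
  have "snd X y \<le> snd X x" using bis_unf(9)[OF assms(1) bis_meas[OF assms(1,2)] _ a2] 1 by auto
  with 1 show ?thesis by auto
qed

lemma bis_sum: assumes "is_BIS M X" "\<And>k. u k \<in> fst X" "finite A"
  shows "(\<lambda>t. \<Sum>k\<in>A. u k t) \<in> fst X \<and> snd X (\<lambda>t. \<Sum>k\<in>A. u k t) \<le> (\<Sum>k\<in>A. snd X (u k))"
  using assms(3)
proof (induction A rule: finite_induct)
  case empty
  then show ?case using bis_unf(2)[OF assms(1)] bis_norm0[OF assms(1)] by simp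
next
  case (insert a A)
  have e: "(\<lambda>t. \<Sum>k\<in>insert a A. u k t) = (\<lambda>t. u a t + (\<lambda>t. \<Sum>k\<in>A. u k t) t)"
    using insert by simp
  show ?case unfolding e using bis_unf(3,5)[OF assms(1) assms(2)[of a], of "(\<lambda>t. \<Sum>k\<in>A. u k t)"] insert
    by fastforce
qed

lemma geom_tail: "n \<le> m \<Longrightarrow> (\<Sum>k\<in>{n..<m}. (1/2::real)^k) = 2*(1/2)^n - 2*(1/2)^m"
proof (induction m rule: dec_induct)
  case base then show ?case by simp
next
  case (step m) then show ?case by (simp add: sum.atLeastLessThan_Suc)
qed




lemma bis_series_ae:
  assumes B: "is_BIS M X" and u: "\<And>k. u k \<in> fst X" and pos: "\<And>k t. 0 \<le> u k t"
    and nb: "\<And>k. snd X (u k) \<le> (1/2)^k"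
  shows "AE t in M. (\<lambda>k. u k t) \<longlonglongrightarrow> 0"
proof -
  define s where "s K = (\<lambda>t. \<Sum>k\<in>{..<K}. u k t)" for K
  have sE: "s K \<in> fst X" for K unfolding s_def using bis_sum[OF B u, of "{..<K}"] by simp
  have diffeq: "(\<lambda>t. s m t - s n t) = (\<lambda>t. \<Sum>k\<in>{n..<m}. u k t)" if "n \<le> m" for m n
  proof
    fix t
    have "(\<Sum>k\<in>{0..<n}. u k t) + (\<Sum>k\<in>{n..<m}. u k t) = (\<Sum>k\<in>{0..<m}. u k t)"
      using sum.atLeastLessThan_concat[of 0 n m] that by simp
    then show "s m t - s n t = (\<Sum>k\<in>{n..<m}. u k t)" unfolding s_def
      by (simp add: atLeast0LessThan)
  qed
  have dn: "snd X (\<lambda>t. s m t - s n t) \<le> 2*(1/2)^n" if "n \<le> m" for m n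
  proof -
    have "snd X (\<lambda>t. s m t - s n t) \<le> (\<Sum>k\<in>{n..<m}. snd X (u k))"
      unfolding diffeq[OF that] using bis_sum[OF B u, of "{n..<m}"] by simp
    also have "\<dots> \<le> (\<Sum>k\<in>{n..<m}. (1/2::real)^k)" by (rule sum_mono) (rule nb)
    also have "\<dots> = 2*(1/2)^n - 2*(1/2)^m" using geom_tail[OF that] .
    also have "\<dots> \<le> 2*(1/2)^n" by simp
    finally show ?thesis .
  qed
  have cauchy: "\<forall>\<epsilon>>0. \<exists>K. \<forall>m\<ge>K. \<forall>n\<ge>K. snd X (\<lambda>t. s m t - s n t) < \<epsilon>"
  proof (intro allI impI)
    fix \<epsilon> :: real assume "\<epsilon> > 0"
    then obtain K where K: "(1/2::real)^K < \<epsilon>/2" using real_arch_pow_inv[of "\<epsilon>/2" "1/2::real"] by auto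
    have "snd X (\<lambda>t. s m t - s n t) < \<epsilon>" if "m \<ge> K" "n \<ge> K" for m n
    proof (cases "n \<le> m")
      case True
      have "(1/2::real)^n \<le> (1/2)^K" using that by (simp add: power_decreasing)
      then show ?thesis using dn[OF True] K by linarith
    next
      case False
      have "(1/2::real)^m \<le> (1/2)^K" using that by (simp add: power_decreasing)
      moreover have "snd X (\<lambda>t. s n t - s m t) \<le> 2*(1/2)^m" using dn[of m n] False by simp
      ultimately show ?thesis using K bis_diff_sym[OF B sE sE, of m n] by linarith
    qed
    then show "\<exists>K. \<forall>m\<ge>K. \<forall>n\<ge>K. snd X (\<lambda>t. s m t - s n t) < \<epsilon>" by blast
  qed
  have "\<exists>g\<in>fst X. (\<lambda>n. snd X (\<lambda>t. s n t - g t)) \<longlonglongrightarrow> 0"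
    by (rule bis_unf(8)[OF B]) (use sE cauchy in auto)
  then obtain S where SE: "S \<in> fst X" and lim: "(\<lambda>n. snd X (\<lambda>t. s n t - S t)) \<longlonglongrightarrow> 0"
    by blast
  have "AE t in M. s K t \<le> S t" for K
  proof -
    define w where "w = (\<lambda>t. max (s K t - S t) 0)"
    have wm: "w \<in> borel_measurable M" unfolding w_def
      using bis_meas[OF B sE] bis_meas[OF B SE] by measurable
    have wle: "snd X w \<le> snd X (\<lambda>t. s m t - S t)" if "m \<ge> K" for m
    proof -
      have sKm: "s K t \<le> s m t" for t unfolding s_def
        using that by (intro sum_mono2) (auto simp: pos)
      have "\<bar>w t\<bar> \<le> \<bar>(\<lambda>t. s m t - S t) t\<bar>" for t unfolding w_def using sKm[of t] by auto
      then have "AE t in M. \<bar>w t\<bar> \<le> \<bar>(\<lambda>t. s m t - S t) t\<bar>" by simp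
      then show ?thesis using bis_unf(9)[OF B wm bis_diff[OF B sE SE]] by simp
    qed
    have wE: "w \<in> fst X"
    proof -
      have "AE t in M. \<bar>w t\<bar> \<le> \<bar>(\<lambda>t. s K t - S t) t\<bar>" unfolding w_def by auto
      then show ?thesis using bis_unf(9)[OF B wm bis_diff[OF B sE SE]] by simp
    qed
    have "snd X w \<le> 0"
      using tendsto_le[OF trivial_limit_sequentially lim tendsto_const] wle
      by (auto simp: eventually_sequentially)
    then have "snd X w = 0" using bis_nonneg[OF B wE] by simp
    then have "AE t in M. w t = 0" using bis_unf(7)[OF B wE] by simp
    then show ?thesis unfolding w_def by eventually_elim (auto simp: max_def split: if_splits)
  qed
  then have "AE t in M. \<forall>K. s K t \<le> S t" by (simp add: AE_all_countable)
  then show ?thesis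
  proof eventually_elim
    case (elim t)
    have "summable (\<lambda>k. u k t)"
      by (rule summableI_nonneg_bounded[where x="S t"]) (use pos elim in \<open>auto simp: s_def\<close>)
    then show ?case by (rule summable_LIMSEQ_zero)
  qed
qed

lemma bis_ae_conv:
  assumes B: "is_BIS M X" and v: "\<And>k. v k \<in> fst X" and a: "a \<in> fst X"
    and nb: "\<And>k. snd X (\<lambda>t. v k t - a t) \<le> (1/2)^k"
  shows "AE t in M. (\<lambda>k. v k t) \<longlonglongrightarrow> a t"
proof -
  define u where "u k = (\<lambda>t. \<bar>v k t - a t\<bar>)" for k
  have um: "u k \<in> borel_measurable M" for k unfolding u_def
    using bis_meas[OF B v] bis_meas[OF B a] by measurable
  have "u k \<in> fst X \<and> snd X (u k) \<le> snd X (\<lambda>t. v k t - a t)" for k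
  proof -
    have "AE t in M. \<bar>u k t\<bar> \<le> \<bar>v k t - a t\<bar>" by (simp add: u_def)
    then show ?thesis using bis_unf(9)[OF B um[of k] bis_diff[OF B v[of k] a]] by blast
  qed
  then have "AE t in M. (\<lambda>k. u k t) \<longlonglongrightarrow> 0"
    using nb by (intro bis_series_ae[OF B]) (auto simp: u_def intro: order_trans)
  then show ?thesis
    by eventually_elim (simp add: u_def tendsto_rabs_zero_iff LIM_zero_iff)
qed

lemma bis_uniq:
  assumes BX: "is_BIS M X" and BY: "is_BIS M Y"
    and fX: "\<And>n. f n \<in> fst X" and fY: "\<And>n. f n \<in> fst Y" and a: "a \<in> fst X" and b: "b \<in> fst Y"
    and la: "(\<lambda>n. snd X (\<lambda>t. f n t - a t)) \<longlonglongrightarrow> 0"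
    and lb: "(\<lambda>n. snd Y (\<lambda>t. f n t - b t)) \<longlonglongrightarrow> 0"
  shows "AE t in M. a t = b t"
proof -
  have ex: "\<exists>n. snd X (\<lambda>t. f n t - a t) \<le> (1/2)^k \<and> snd Y (\<lambda>t. f n t - b t) \<le> (1/2)^k" for k
  proof -
    have "eventually (\<lambda>n. snd X (\<lambda>t. f n t - a t) < (1/2)^k) sequentially"
      using order_tendstoD(2)[OF la, of "(1/2)^k"] by simp
    moreover have "eventually (\<lambda>n. snd Y (\<lambda>t. f n t - b t) < (1/2)^k) sequentially"
      using order_tendstoD(2)[OF lb, of "(1/2)^k"] by simp
    ultimately have "eventually (\<lambda>n. snd X (\<lambda>t. f n t - a t) < (1/2)^k \<and> snd Y (\<lambda>t. f n t - b t) < (1/2)^k) sequentially"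
      by (rule eventually_conj)
    then obtain N where "\<forall>n\<ge>N. snd X (\<lambda>t. f n t - a t) < (1/2)^k \<and> snd Y (\<lambda>t. f n t - b t) < (1/2)^k"
      by (auto simp: eventually_sequentially)
    then show ?thesis by (intro exI[of _ N]) auto
  qed
  have "\<exists>r. \<forall>k. snd X (\<lambda>t. f (r k) t - a t) \<le> (1/2)^k \<and> snd Y (\<lambda>t. f (r k) t - b t) \<le> (1/2)^k"
    by (rule choice) (rule allI, rule ex)
  then obtain r where r: "\<And>k. snd X (\<lambda>t. f (r k) t - a t) \<le> (1/2)^k \<and> snd Y (\<lambda>t. f (r k) t - b t) \<le> (1/2)^k"
    by blast
  have "AE t in M. (\<lambda>k. f (r k) t) \<longlonglongrightarrow> a t"
    using r by (intro bis_ae_conv[OF BX fX a]) auto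
  moreover have "AE t in M. (\<lambda>k. f (r k) t) \<longlonglongrightarrow> b t"
    using r by (intro bis_ae_conv[OF BY fY b]) auto
  ultimately show ?thesis by eventually_elim (rule LIMSEQ_unique)
qed




definition infset :: "'a measure \<Rightarrow> 'a bis set \<Rightarrow> ('a \<Rightarrow> real) set" where
  "infset M S = {x \<in> borel_measurable M. (\<forall>X\<in>S. x \<in> fst X) \<and> bdd_above ((\<lambda>X. snd X x) ` S)}"

definition infnorm :: "'a bis set \<Rightarrow> ('a \<Rightarrow> real) \<Rightarrow> real" where
  "infnorm S x = (SUP X\<in>S. snd X x)"

lemma infset_I: "x \<in> borel_measurable M \<Longrightarrow> (\<And>X. X\<in>S \<Longrightarrow> x \<in> fst X) \<Longrightarrow> (\<And>X. X\<in>S \<Longrightarrow> snd X x \<le> c)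
  \<Longrightarrow> x \<in> infset M S"
proof -
  assume a: "x \<in> borel_measurable M" "\<And>X. X\<in>S \<Longrightarrow> x \<in> fst X" "\<And>X. X\<in>S \<Longrightarrow> snd X x \<le> c"
  have "bdd_above ((\<lambda>X. snd X x) ` S)" by (rule bdd_aboveI2) (rule a(3))
  then show ?thesis using a(1,2) unfolding infset_def by blast
qed

lemma infset_mem: "x \<in> infset M S \<Longrightarrow> X \<in> S \<Longrightarrow> x \<in> fst X"
  unfolding infset_def by auto

lemma infset_meas: "x \<in> infset M S \<Longrightarrow> x \<in> borel_measurable M"
  unfolding infset_def by auto

lemma inf_upper: "x \<in> infset M S \<Longrightarrow> X \<in> S \<Longrightarrow> snd X x \<le> infnorm S x"
  unfolding infnorm_def by (rule cSUP_upper) (auto simp: infset_def)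

lemma inf_least: "S \<noteq> {} \<Longrightarrow> (\<And>X. X\<in>S \<Longrightarrow> snd X x \<le> c) \<Longrightarrow> infnorm S x \<le> c"
  unfolding infnorm_def by (rule cSUP_least)

lemma inf_BIS:
  assumes ne: "S \<noteq> {}" and SB: "\<And>X. X \<in> S \<Longrightarrow> is_BIS M X"
  shows "is_BIS M (infset M S, infnorm S)"
proof -
  obtain X0 where X0: "X0 \<in> S" using ne by blast
  let ?G = "infset M S" and ?N = "infnorm S"
  have nn: "0 \<le> ?N x" if "x \<in> ?G" for x
    using bis_nonneg[OF SB[OF X0] infset_mem[OF that X0]] inf_upper[OF that X0] by linarith
  have zero: "(\<lambda>_. 0) \<in> ?G"
    by (rule infset_I[where c=0]) (auto simp: bis_unf(2)[OF SB] bis_norm0[OF SB])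
  have addG: "(\<lambda>t. x t + y t) \<in> ?G" if "x \<in> ?G" "y \<in> ?G" for x y
  proof (rule infset_I[where c="?N x + ?N y"])
    show "(\<lambda>t. x t + y t) \<in> borel_measurable M"
      using infset_meas[OF that(1)] infset_meas[OF that(2)] by (rule borel_measurable_add)
  next
    fix X assume X: "X \<in> S"
    show "(\<lambda>t. x t + y t) \<in> fst X" using bis_unf(3)[OF SB[OF X]] infset_mem[OF _ X] that by blast
    have "snd X (\<lambda>t. x t + y t) \<le> snd X x + snd X y"
      using bis_unf(5)[OF SB[OF X]] infset_mem[OF _ X] that by blast
    then show "snd X (\<lambda>t. x t + y t) \<le> ?N x + ?N y"
      using inf_upper[OF that(1) X] inf_upper[OF that(2) X] by linarith
  qed
  have smulG: "(\<lambda>t. c * x t) \<in> ?G" if "x \<in> ?G" for x c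
  proof (rule infset_I[where c="\<bar>c\<bar> * ?N x"])
    show "(\<lambda>t. c * x t) \<in> borel_measurable M"
      using infset_meas[OF that(1)] by (intro borel_measurable_times borel_measurable_const)
  next
    fix X assume X: "X \<in> S"
    show "(\<lambda>t. c * x t) \<in> fst X" using bis_unf(4)[OF SB[OF X]] infset_mem[OF _ X] that by blast
    have "snd X (\<lambda>t. c * x t) = \<bar>c\<bar> * snd X x"
      using bis_unf(6)[OF SB[OF X]] infset_mem[OF _ X] that by blast
    then show "snd X (\<lambda>t. c * x t) \<le> \<bar>c\<bar> * ?N x"
      using inf_upper[OF that(1) X] by (simp add: mult_left_mono)
  qed
  have diffG: "(\<lambda>t. x t - y t) \<in> ?G" if "x \<in> ?G" "y \<in> ?G" for x y
  proof -
    have "(\<lambda>t. x t + (\<lambda>t. (-1) * y t) t) \<in> ?G" using addG[OF that(1) smulG[OF that(2), of "-1"]] .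
    then show ?thesis by simp
  qed
  have tri: "?N (\<lambda>t. x t + y t) \<le> ?N x + ?N y" if "x \<in> ?G" "y \<in> ?G" for x y
  proof (rule inf_least[OF ne])
    fix X assume X: "X \<in> S"
    have "snd X (\<lambda>t. x t + y t) \<le> snd X x + snd X y"
      using bis_unf(5)[OF SB[OF X]] infset_mem[OF _ X] that by blast
    then show "snd X (\<lambda>t. x t + y t) \<le> ?N x + ?N y"
      using inf_upper[OF that(1) X] inf_upper[OF that(2) X] by linarith
  qed
  have hom: "?N (\<lambda>t. c * x t) = \<bar>c\<bar> * ?N x" if x: "x \<in> ?G" for x c
  proof (rule antisym)
    show "?N (\<lambda>t. c * x t) \<le> \<bar>c\<bar> * ?N x"
    proof (rule inf_least[OF ne])
      fix X assume X: "X \<in> S"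
      have "snd X (\<lambda>t. c * x t) = \<bar>c\<bar> * snd X x"
        using bis_unf(6)[OF SB[OF X]] infset_mem[OF _ X] that by blast
      then show "snd X (\<lambda>t. c * x t) \<le> \<bar>c\<bar> * ?N x"
        using inf_upper[OF that(1) X] by (simp add: mult_left_mono)
    qed
  next
    show "\<bar>c\<bar> * ?N x \<le> ?N (\<lambda>t. c * x t)"
    proof (cases "c = 0")
      case True
      then show ?thesis using nn[OF smulG[OF x, of c]] by simp
    next
      case False
      have "?N x \<le> ?N (\<lambda>t. c * x t) / \<bar>c\<bar>"
      proof (rule inf_least[OF ne])
        fix X assume X: "X \<in> S"
        have "snd X (\<lambda>t. c * x t) = \<bar>c\<bar> * snd X x"
          using bis_unf(6)[OF SB[OF X]] infset_mem[OF _ X] that by blast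
        then have "\<bar>c\<bar> * snd X x \<le> ?N (\<lambda>t. c * x t)"
          using inf_upper[OF smulG[OF x, of c] X] by simp
        then show "snd X x \<le> ?N (\<lambda>t. c * x t) / \<bar>c\<bar>"
          using False by (simp add: pos_le_divide_eq mult.commute)
      qed
      then show ?thesis using False by (simp add: pos_le_divide_eq mult.commute)
    qed
  qed
  have null: "?N x = 0 \<longleftrightarrow> (AE t in M. x t = 0)" if x: "x \<in> ?G" for x
  proof
    assume "?N x = 0"
    then have "snd X0 x = 0"
      using inf_upper[OF x X0] bis_nonneg[OF SB[OF X0] infset_mem[OF x X0]] by linarith
    then show "AE t in M. x t = 0" using bis_unf(7)[OF SB[OF X0] infset_mem[OF x X0]] by simp
  next
    assume ae: "AE t in M. x t = 0"
    have "?N x \<le> 0"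
    proof (rule inf_least[OF ne])
      fix X assume X: "X \<in> S"
      show "snd X x \<le> 0" using bis_unf(7)[OF SB[OF X] infset_mem[OF x X]] ae by simp
    qed
    then show "?N x = 0" using nn[OF x] by linarith
  qed
  have ideal: "x \<in> ?G \<and> ?N x \<le> ?N y"
    if xm: "x \<in> borel_measurable M" and y: "y \<in> ?G" and ae: "AE t in M. \<bar>x t\<bar> \<le> \<bar>y t\<bar>" for x y
  proof -
    have h: "x \<in> fst X \<and> snd X x \<le> ?N y" if X: "X \<in> S" for X
      using bis_unf(9)[OF SB[OF X] xm infset_mem[OF y X] ae] inf_upper[OF y X] by linarith
    have "x \<in> ?G" by (rule infset_I[where c="?N y"]) (use xm h in auto)
    moreover have "?N x \<le> ?N y" by (rule inf_least[OF ne]) (use h in auto)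
    ultimately show ?thesis by blast
  qed
  have complete: "\<exists>g\<in>?G. (\<lambda>n. ?N (\<lambda>t. f n t - g t)) \<longlonglongrightarrow> 0"
    if fG: "\<forall>n. f n \<in> ?G" and cau: "\<forall>\<epsilon>>0. \<exists>K. \<forall>m\<ge>K. \<forall>n\<ge>K. ?N (\<lambda>t. f m t - f n t) < \<epsilon>" for f
  proof -
    have fX: "f n \<in> fst X" if "X \<in> S" for X n using infset_mem[OF _ that] fG by blast
    have ex: "\<exists>g\<in>fst X. (\<lambda>n. snd X (\<lambda>t. f n t - g t)) \<longlonglongrightarrow> 0" if X: "X \<in> S" for X
    proof (rule bis_unf(8)[OF SB[OF X]])
      show "\<forall>n. f n \<in> fst X" using fX[OF X] by blast
      show "\<forall>\<epsilon>>0. \<exists>K. \<forall>m\<ge>K. \<forall>n\<ge>K. snd X (\<lambda>t. f m t - f n t) < \<epsilon>"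
      proof (intro allI impI)
        fix \<epsilon> :: real assume "\<epsilon> > 0"
        then obtain K where K: "\<forall>m\<ge>K. \<forall>n\<ge>K. ?N (\<lambda>t. f m t - f n t) < \<epsilon>" using cau by blast
        have "snd X (\<lambda>t. f m t - f n t) < \<epsilon>" if "m \<ge> K" "n \<ge> K" for m n
          using K that inf_upper[OF diffG[OF fG[rule_format] fG[rule_format]] X, of m n] by force
        then show "\<exists>K. \<forall>m\<ge>K. \<forall>n\<ge>K. snd X (\<lambda>t. f m t - f n t) < \<epsilon>" by blast
      qed
    qed
    have "\<forall>X\<in>S. \<exists>g. g \<in> fst X \<and> (\<lambda>n. snd X (\<lambda>t. f n t - g t)) \<longlonglongrightarrow> 0"
      using ex by blast
    then have "\<exists>gg. \<forall>X\<in>S. gg X \<in> fst X \<and> (\<lambda>n. snd X (\<lambda>t. f n t - gg X t)) \<longlonglongrightarrow> 0"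
      by (rule bchoice)
    then obtain gg where gg: "\<And>X. X \<in> S \<Longrightarrow> gg X \<in> fst X \<and> (\<lambda>n. snd X (\<lambda>t. f n t - gg X t)) \<longlonglongrightarrow> 0"
      by blast
    define g where "g = gg X0"
    have gm: "g \<in> borel_measurable M" unfolding g_def using bis_meas[OF SB[OF X0]] gg[OF X0] by blast
    have gX: "g \<in> fst X \<and> (\<lambda>n. snd X (\<lambda>t. f n t - g t)) \<longlonglongrightarrow> 0" if X: "X \<in> S" for X
    proof -
      have ae: "AE t in M. gg X t = g t" unfolding g_def
        by (rule bis_uniq[OF SB[OF X] SB[OF X0] fX[OF X] fX[OF X0] conjunct1[OF gg[OF X]] conjunct1[OF gg[OF X0]] conjunct2[OF gg[OF X]] conjunct2[OF gg[OF X0]]])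
      have ae': "AE t in M. g t = gg X t" using ae by eventually_elim simp
      have 1: "g \<in> fst X" using bis_ae_eq[OF SB[OF X] _ gm ae'] gg[OF X] by blast
      have "snd X (\<lambda>t. f n t - g t) = snd X (\<lambda>t. f n t - gg X t)" for n
      proof -
        have m: "(\<lambda>t. f n t - g t) \<in> borel_measurable M"
          using bis_meas[OF SB[OF X] fX[OF X]] gm by (rule borel_measurable_diff)
        have "AE t in M. f n t - g t = f n t - gg X t" using ae by eventually_elim simp
        then show ?thesis using bis_ae_eq[OF SB[OF X] bis_diff[OF SB[OF X] fX[OF X] conjunct1[OF gg[OF X]]] m] by simp
      qed
      then show ?thesis using 1 gg[OF X] by simp
    qed
    have key: "\<exists>K. \<forall>n\<ge>K. \<forall>X\<in>S. snd X (\<lambda>t. f n t - g t) \<le> \<epsilon>" if "\<epsilon> > 0" for \<epsilon>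
    proof -
      obtain K where K: "\<forall>m\<ge>K. \<forall>n\<ge>K. ?N (\<lambda>t. f m t - f n t) < \<epsilon>" using cau \<open>\<epsilon> > 0\<close> by blast
      have "snd X (\<lambda>t. f n t - g t) \<le> \<epsilon>" if n: "n \<ge> K" and X: "X \<in> S" for n X
      proof (rule field_le_epsilon)
        fix \<delta> :: real assume "\<delta> > 0"
        have "eventually (\<lambda>m. snd X (\<lambda>t. f m t - g t) < \<delta>) sequentially"
          using order_tendstoD(2)[OF conjunct2[OF gX[OF X]] \<open>\<delta> > 0\<close>] .
        then obtain N where N: "\<forall>m\<ge>N. snd X (\<lambda>t. f m t - g t) < \<delta>" by (auto simp: eventually_sequentially)
        define m where "m = max N K"
        have "snd X (\<lambda>t. f n t - g t) \<le> snd X (\<lambda>t. f n t - f m t) + snd X (\<lambda>t. f m t - g t)"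
          using bis_tri3[OF SB[OF X] fX[OF X] fX[OF X] conjunct1[OF gX[OF X]]] .
        moreover have "snd X (\<lambda>t. f n t - f m t) < \<epsilon>"
        proof -
          have "m \<ge> K" unfolding m_def by simp
          then have "?N (\<lambda>t. f n t - f m t) < \<epsilon>" using K n by blast
          then show ?thesis using inf_upper[OF diffG[OF fG[rule_format] fG[rule_format]] X, of n m] by linarith
        qed
        moreover have "snd X (\<lambda>t. f m t - g t) < \<delta>" using N unfolding m_def by simp
        ultimately show "snd X (\<lambda>t. f n t - g t) \<le> \<epsilon> + \<delta>" by linarith
      qed
      then show ?thesis by blast
    qed
    obtain K1 where K1: "\<forall>n\<ge>K1. \<forall>X\<in>S. snd X (\<lambda>t. f n t - g t) \<le> 1" using key[of 1] by auto
    have gG: "g \<in> ?G"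
    proof (rule infset_I[where c="1 + ?N (f K1)"])
      show "g \<in> borel_measurable M" by (rule gm)
    next
      fix X assume X: "X \<in> S"
      show "g \<in> fst X" using gX[OF X] by blast
      have z: "(\<lambda>_. 0) \<in> fst X" using bis_unf(2)[OF SB[OF X]] .
      have "snd X (\<lambda>t. g t - 0) \<le> snd X (\<lambda>t. g t - f K1 t) + snd X (\<lambda>t. f K1 t - 0)"
        using bis_tri3[OF SB[OF X] conjunct1[OF gX[OF X]] fX[OF X] z] .
      moreover have "snd X (\<lambda>t. g t - f K1 t) = snd X (\<lambda>t. f K1 t - g t)"
        using bis_diff_sym[OF SB[OF X] conjunct1[OF gX[OF X]] fX[OF X]] .
      moreover have "snd X (\<lambda>t. f K1 t - g t) \<le> 1" using K1 X by simp
      moreover have "snd X (f K1) \<le> ?N (f K1)" using inf_upper[OF fG[rule_format] X] .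
      ultimately show "snd X g \<le> 1 + ?N (f K1)" by simp
    qed
    have "(\<lambda>n. ?N (\<lambda>t. f n t - g t)) \<longlonglongrightarrow> 0"
      unfolding LIMSEQ_iff
    proof (intro allI impI)
      fix r :: real assume "r > 0"
      then obtain K where K: "\<forall>n\<ge>K. \<forall>X\<in>S. snd X (\<lambda>t. f n t - g t) \<le> r/2" using key[of "r/2"] by auto
      have "norm (?N (\<lambda>t. f n t - g t) - 0) < r" if "n \<ge> K" for n
      proof -
        have "?N (\<lambda>t. f n t - g t) \<le> r/2" by (rule inf_least[OF ne]) (use K that in auto)
        moreover have "0 \<le> ?N (\<lambda>t. f n t - g t)" using nn[OF diffG[OF fG[rule_format] gG]] .
        ultimately show ?thesis using \<open>r > 0\<close> by simp
      qed
      then show "\<exists>no. \<forall>n\<ge>no. norm (?N (\<lambda>t. f n t - g t) - 0) < r" by blast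
    qed
    then show ?thesis using gG by blast
  qed
  show ?thesis unfolding is_BIS_def prod.case
  proof (intro conjI)
    show "?G \<subseteq> borel_measurable M" by (auto simp: infset_def)
    show "(\<lambda>_. 0) \<in> ?G" by (rule zero)
    show "\<forall>x\<in>?G. \<forall>y\<in>?G. (\<lambda>t. x t + y t) \<in> ?G" using addG by blast
    show "\<forall>c. \<forall>x\<in>?G. (\<lambda>t. c * x t) \<in> ?G" using smulG by blast
    show "\<forall>x\<in>?G. \<forall>y\<in>?G. ?N (\<lambda>t. x t + y t) \<le> ?N x + ?N y" using tri by blast
    show "\<forall>c. \<forall>x\<in>?G. ?N (\<lambda>t. c * x t) = \<bar>c\<bar> * ?N x" using hom by blast
    show "\<forall>x\<in>?G. (?N x = 0) = (AE t in M. x t = 0)" using null by blast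
    show "\<forall>f. (\<forall>n. f n \<in> ?G) \<longrightarrow>
        (\<forall>\<epsilon>>0. \<exists>K. \<forall>m\<ge>K. \<forall>n\<ge>K. ?N (\<lambda>t. f m t - f n t) < \<epsilon>) \<longrightarrow>
        (\<exists>g\<in>?G. (\<lambda>n. ?N (\<lambda>t. f n t - g t)) \<longlonglongrightarrow> 0)"
      by (intro allI impI) (rule complete)
    show "\<forall>x\<in>borel_measurable M. \<forall>y\<in>?G. (AE t in M. \<bar>x t\<bar> \<le> \<bar>y t\<bar>) \<longrightarrow> x \<in> ?G \<and> ?N x \<le> ?N y"
      using ideal by blast
  qed
qed




lemma glb_exists:
  assumes SJ: "S \<subseteq> J_class M" and ne: "S \<noteq> {}"
  shows "\<exists>L\<in>J_class M. (\<forall>X\<in>S. sub1 L X) \<and> (\<forall>U\<in>J_class M. (\<forall>X\<in>S. sub1 U X) \<longrightarrow> sub1 U L)"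
proof -
  obtain X0 where X0: "X0 \<in> S" using ne by blast
  have SB: "is_BIS M X" if "X \<in> S" for X using SJ that unfolding J_class_def by blast
  have one: "(\<lambda>_. 1) \<in> fst X \<and> snd X (\<lambda>_. 1) = 1" if "X \<in> S" for X
    using SJ that unfolding J_class_def by blast
  let ?L = "(infset M S, infnorm S)"
  have B: "is_BIS M ?L" by (rule inf_BIS[OF ne SB])
  have oneG: "(\<lambda>_. 1) \<in> infset M S"
    by (rule infset_I[where c=1]) (use one in auto)
  have n1: "infnorm S (\<lambda>_. 1) = 1"
  proof (rule antisym)
    show "infnorm S (\<lambda>_. 1) \<le> 1" by (rule inf_least[OF ne]) (use one in auto)
    show "1 \<le> infnorm S (\<lambda>_. 1)" using inf_upper[OF oneG X0] one[OF X0] by simp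
  qed
  have mw: "maximal_width M ?L" unfolding maximal_width_def
  proof (intro ballI impI)
    fix z :: "'a \<Rightarrow> real" assume "\<forall>y\<in>fst ?L. AE t in M. z t * y t = 0"
    then have "AE t in M. z t * 1 = 0" using oneG by fastforce
    then show "AE t in M. z t = 0" by simp
  qed
  have LJ: "?L \<in> J_class M" unfolding J_class_def using B mw oneG n1 by simp
  have low: "sub1 ?L X" if X: "X \<in> S" for X
    unfolding sub1_def using infset_mem[OF _ X] inf_upper[OF _ X] by auto
  have great: "sub1 U ?L" if U: "U \<in> J_class M" and lb: "\<forall>X\<in>S. sub1 U X" for U
  proof -
    have UB: "is_BIS M U" using U unfolding J_class_def by blast
    have h: "x \<in> fst X \<and> snd X x \<le> snd U x" if "x \<in> fst U" "X \<in> S" for x X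
      using lb that unfolding sub1_def by blast
    have "x \<in> infset M S \<and> infnorm S x \<le> snd U x" if x: "x \<in> fst U" for x
    proof
      show "x \<in> infset M S"
        by (rule infset_I[where c="snd U x"]) (use bis_meas[OF UB x] h[OF x] in auto)
      show "infnorm S x \<le> snd U x" by (rule inf_least[OF ne]) (use h[OF x] in auto)
    qed
    then show ?thesis unfolding sub1_def by auto
  qed
  show ?thesis using LJ low great by blast
qed

theorem theorem2:
  fixes P :: "'a measure"
  assumes "prob_space P" and "admissible P" and "atomless P"
  shows "dedekind_complete (J_class P) sub1"
  unfolding dedekind_complete_def
proof (intro conjI allI impI)
  fix S assume a: "S \<subseteq> J_class P \<and> S \<noteq> {} \<and> (\<exists>U\<in>J_class P. \<forall>X\<in>S. sub1 X U)"
  define T where "T = {U \<in> J_class P. \<forall>X\<in>S. sub1 X U}"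
  have TJ: "T \<subseteq> J_class P" and Tne: "T \<noteq> {}" using a unfolding T_def by auto
  obtain L where L: "L \<in> J_class P" "\<forall>U\<in>T. sub1 L U" "\<forall>V\<in>J_class P. (\<forall>U\<in>T. sub1 V U) \<longrightarrow> sub1 V L"
    using glb_exists[OF TJ Tne] by blast
  have "\<forall>X\<in>S. sub1 X L"
  proof
    fix X assume X: "X \<in> S"
    have "X \<in> J_class P" using a X by blast
    moreover have "\<forall>U\<in>T. sub1 X U" using X unfolding T_def by blast
    ultimately show "sub1 X L" using L(3) by blast
  qed
  moreover have "\<forall>U\<in>J_class P. (\<forall>X\<in>S. sub1 X U) \<longrightarrow> sub1 L U"
    using L(2) unfolding T_def by blast
  ultimately show "\<exists>L\<in>J_class P. (\<forall>X\<in>S. sub1 X L) \<and> (\<forall>U\<in>J_class P. (\<forall>X\<in>S. sub1 X U) \<longrightarrow> sub1 L U)"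
    using L(1) by blast
next
  fix S assume a: "S \<subseteq> J_class P \<and> S \<noteq> {} \<and> (\<exists>U\<in>J_class P. \<forall>X\<in>S. sub1 U X)"
  then show "\<exists>L\<in>J_class P. (\<forall>X\<in>S. sub1 L X) \<and> (\<forall>U\<in>J_class P. (\<forall>X\<in>S. sub1 U X) \<longrightarrow> sub1 U L)"
    using glb_exists[of S P] by blast
qed


end
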